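(* Let $M\in\mathbb{T}^{n\times n}$ and $q\in\mathbb{T}^n$ be such that no column of $M$ is the all-$(-\infty)$ vector and no entry of $q$ equals $-\infty$, and let $G=(V,E)$ be the associated colored bipartite multigraph. If $F\subset E$ covers all row nodes of $G$, then the point $(w,z)=\alpha(F)$ satisfies $w\oplus M\odot z=q$.
   Context: $\mathbb{T}=\mathbb{R}\cup\{-\infty\}$, $\oplus=\max$, $\odot=+$, $(M\odot z)_i=\max_j(M_{ij}+z_j)$; convention $a-(-\infty)=+\infty$. The graph $G$ has row nodes $u_1,\dots,u_n$ and column nodes $v_1,\dots,v_n$; its edges are a blue edge $u_iv_i$ for every $i$, and a red edge $u_iv_j$ for every $i,j$ such that $q_i-M_{ij}$ is minimal among $q_k-M_{kj}$, $k\in[n]$ (these minima are finite). For $F\subset E$, $\alpha(F)=(w,z)\in\mathbb{T}^n\times\mathbb{T}^n$ where $w_i=q_i$ if the blue edge $u_iv_i$ is in $F$ and $w_i=-\infty$ otherwise, and $z_j=q_i-M_{ij}$ if some red edge $u_iv_j$ is in $F$ and $z_j=-\infty$ otherwise. $F$ covers a node if some edge of $F$ is incident to it. *)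

theory Defs
  imports "HOL-Analysis.Analysis" "HOL-Library.Extended_Real"
begin

text \<open>Tropical (max-plus) semiring T = R \<union> {-\<infinity>}, modelled inside ereal by the
  values different from +\<infinity>.  Rows/columns are indexed by a finite type 'n
  (so [n] is UNIV :: 'n set).  Subtraction on ereal satisfies a - (-\<infinity>) = +\<infinity>
  for finite a, as in the paper's convention.\<close>

definition trop :: "ereal \<Rightarrow> bool" where
  "trop x \<longleftrightarrow> x \<noteq> \<infinity>"

definition trop_mv :: "('n::finite \<Rightarrow> 'n \<Rightarrow> ereal) \<Rightarrow> ('n \<Rightarrow> ereal) \<Rightarrow> 'n \<Rightarrow> ereal" where
  "trop_mv M z i = (SUP j. M i j + z j)"

text \<open>Edges of the coloured bipartite multigraph: Blue i is u_i v_i, Red i j is u_i v_j.\<close>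
datatype 'n edge = Blue 'n | Red 'n 'n

definition is_red :: "('n::finite \<Rightarrow> 'n \<Rightarrow> ereal) \<Rightarrow> ('n \<Rightarrow> ereal) \<Rightarrow> 'n \<Rightarrow> 'n \<Rightarrow> bool" where
  "is_red M q i j \<longleftrightarrow> (\<forall>k. q i - M i j \<le> q k - M k j)"

definition edges :: "('n::finite \<Rightarrow> 'n \<Rightarrow> ereal) \<Rightarrow> ('n \<Rightarrow> ereal) \<Rightarrow> 'n edge set" where
  "edges M q = range Blue \<union> {Red i j | i j. is_red M q i j}"

definition covers_row :: "'n edge set \<Rightarrow> 'n \<Rightarrow> bool" where
  "covers_row F i \<longleftrightarrow> Blue i \<in> F \<or> (\<exists>j. Red i j \<in> F)"

definition alpha_w :: "('n::finite \<Rightarrow> ereal) \<Rightarrow> 'n edge set \<Rightarrow> 'n \<Rightarrow> ereal" where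
  "alpha_w q F i = (if Blue i \<in> F then q i else -\<infinity>)"

definition alpha_z :: "('n::finite \<Rightarrow> 'n \<Rightarrow> ereal) \<Rightarrow> ('n \<Rightarrow> ereal) \<Rightarrow> 'n edge set \<Rightarrow> 'n \<Rightarrow> ereal" where
  "alpha_z M q F j = (if \<exists>i. Red i j \<in> F
      then (let i = (SOME i. Red i j \<in> F) in q i - M i j) else -\<infinity>)"

end

theory Submission
  imports Defs
begin

theorem lemma3p1:
  fixes M :: "'n::finite \<Rightarrow> 'n \<Rightarrow> ereal" and q :: "'n \<Rightarrow> ereal" and F :: "'n edge set"
  assumes M_trop: "\<forall>i j. trop (M i j)"
    and q_trop: "\<forall>i. trop (q i)"
    and cols: "\<forall>j. \<exists>i. M i j \<noteq> -\<infinity>"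
    and q_fin: "\<forall>i. q i \<noteq> -\<infinity>"
    and FE: "F \<subseteq> edges M q"
    and cov: "\<forall>i. covers_row F i"
  shows "\<forall>i. sup (alpha_w q F i) (trop_mv M (alpha_z M q F) i) = q i"
proof -
  have Minf: "M i j \<noteq> \<infinity>" for i j using M_trop by (simp add: trop_def)
  have qr: "\<bar>q i\<bar> \<noteq> \<infinity>" for i using q_trop q_fin by (cases "q i") (auto simp: trop_def)
  have redfin: "\<bar>M i j\<bar> \<noteq> \<infinity>" if "Red i j \<in> F" for i j
  proof -
    have "is_red M q i j" using FE that by (auto simp: edges_def)
    then have le: "q i - M i j \<le> q k - M k j" for k by (simp add: is_red_def)
    obtain c where c: "M c j \<noteq> -\<infinity>" using cols by blast
    have "q c - M c j \<noteq> \<infinity>" using c Minf[of c j] qr[of c]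
      by (cases "M c j"; cases "q c") auto
    with le[of c] have "q i - M i j \<noteq> \<infinity>" by auto
    then show ?thesis using Minf[of i j] qr[of i] by (cases "M i j"; cases "q i") auto
  qed
  have zval: "alpha_z M q F j = q i - M i j" if "Red i j \<in> F" for i j
  proof -
    define i' where "i' = (SOME i. Red i j \<in> F)"
    have i': "Red i' j \<in> F" unfolding i'_def using that by (rule someI)
    have r1: "is_red M q i j" and r2: "is_red M q i' j" using FE that i' by (auto simp: edges_def)
    have "q i - M i j \<le> q i' - M i' j" "q i' - M i' j \<le> q i - M i j"
      using r1 r2 by (auto simp: is_red_def)
    then have "q i' - M i' j = q i - M i j" by auto
    then show ?thesis using that unfolding alpha_z_def i'_def[symmetric] by auto
  qed
  have bound: "M k j + alpha_z M q F j \<le> q k" for k j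
  proof (cases "\<exists>i. Red i j \<in> F")
    case False
    then show ?thesis using Minf[of k j] by (cases "M k j") (simp_all add: alpha_z_def)
  next
    case True
    then obtain i where i: "Red i j \<in> F" by blast
    have "is_red M q i j" using FE i by (auto simp: edges_def)
    then have le: "q i - M i j \<le> q k - M k j" by (simp add: is_red_def)
    show ?thesis unfolding zval[OF i] using le redfin[OF i] qr[of i] qr[of k] Minf[of k j]
      by (cases "M k j"; cases "M i j"; cases "q i"; cases "q k") auto
  qed
  show ?thesis
  proof
    fix i
    have up: "trop_mv M (alpha_z M q F) i \<le> q i"
      unfolding trop_mv_def using bound by (auto intro: SUP_least)
    have wle: "alpha_w q F i \<le> q i" by (simp add: alpha_w_def)
    have ge: "q i \<le> sup (alpha_w q F i) (trop_mv M (alpha_z M q F) i)"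
    proof (cases "Blue i \<in> F")
      case True then show ?thesis by (simp add: alpha_w_def)
    next
      case False
      then obtain j where j: "Red i j \<in> F" using cov by (auto simp: covers_row_def)
      have "M i j + alpha_z M q F j = q i" unfolding zval[OF j]
        using redfin[OF j] qr[of i] by (cases "M i j"; cases "q i") auto
      moreover have "M i j + alpha_z M q F j \<le> trop_mv M (alpha_z M q F) i"
        unfolding trop_mv_def by (rule SUP_upper) auto
      ultimately show ?thesis by (metis sup.coboundedI2)
    qed
    show "sup (alpha_w q F i) (trop_mv M (alpha_z M q F) i) = q i"
      using up wle ge by (auto intro: antisym)
  qed
qed

end
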